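(* Let $G$ be a finite simple graph on $2i$ vertices and let $J\in\mathcal{P}(G)$. Then for each integer $k$ with $0\le k\le i-\frac{|J|}{2}$, $$|C_k(J;G)| = |C_k(\emptyset;G^\ast_J)|.$$
   Context: All graphs are finite simple graphs; $G|_I$ is the induced subgraph on $I\subseteq V(G)$. $\mathcal{E}\mathcal{C}(G)=\{I\subseteq V(G): G|_I \text{ has no connected component of odd order}\}$. For a graph $G$ of even order, $\mathcal{P}(G)=\mathcal{E}\mathcal{C}(G)\cup\{V(G)\}$, a poset under inclusion. For $I\in\mathcal{P}(G)$ and $k\ge0$, $C_k(I;G)$ is the set of chains $I=I_0\subsetneq I_1\subsetneq\cdots\subsetneq I_k=V(G)$ with $I_j\in\mathcal{P}(G)$ for all $1\le j\le k$ (so $C_0(I;G)$ is $\{(V(G))\}$ if $I=V(G)$ and empty otherwise). The reconnected complement $G^\ast_J$ is the graph on $V(G)\setminus J$ in which $\{a,b\}$ is an edge iff there is a path from $a$ to $b$ in $G|_{J\cup\{a,b\}}$. *)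

theory Defs
  imports Main
begin

type_synonym 'a graph = "'a set \<times> 'a set set"

definition verts :: "'a graph \<Rightarrow> 'a set" where "verts G = fst G"
definition edges :: "'a graph \<Rightarrow> 'a set set" where "edges G = snd G"

definition simple_graph :: "'a graph \<Rightarrow> bool" where
  "simple_graph G \<longleftrightarrow> finite (verts G) \<and>
     (\<forall>e\<in>edges G. e \<subseteq> verts G \<and> card e = 2)"

definition induced_adj :: "'a graph \<Rightarrow> 'a set \<Rightarrow> ('a \<times> 'a) set" where
  "induced_adj G S = {(x, y). x \<in> S \<and> y \<in> S \<and> {x, y} \<in> edges G}"

definition component :: "'a graph \<Rightarrow> 'a set \<Rightarrow> 'a \<Rightarrow> 'a set" where
  "component G I x = {y \<in> I. (x, y) \<in> (induced_adj G I)\<^sup>*}"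

definition EC :: "'a graph \<Rightarrow> 'a set set" where
  "EC G = {I. I \<subseteq> verts G \<and> (\<forall>x\<in>I. even (card (component G I x)))}"

definition PP :: "'a graph \<Rightarrow> 'a set set" where
  "PP G = EC G \<union> {verts G}"

text \<open>C_k(I;G): chains I = I_0 \<subset> I_1 \<subset> ... \<subset> I_k = V(G), I_j \<in> P(G) for 1 \<le> j \<le> k,
  represented as lists of length k+1.\<close>
definition chains :: "'a graph \<Rightarrow> 'a set \<Rightarrow> nat \<Rightarrow> 'a set list set" where
  "chains G I k = {c. length c = Suc k \<and> c ! 0 = I \<and> c ! k = verts G \<and>
      (\<forall>j<k. c ! j \<subset> c ! Suc j) \<and> (\<forall>j. 1 \<le> j \<and> j \<le> k \<longrightarrow> c ! j \<in> PP G)}"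

definition reconnected_complement :: "'a graph \<Rightarrow> 'a set \<Rightarrow> 'a graph" where
  "reconnected_complement G J =
     (verts G - J,
      {{a, b} | a b. a \<in> verts G - J \<and> b \<in> verts G - J \<and> a \<noteq> b \<and>
          (a, b) \<in> (induced_adj G (J \<union> {a, b}))\<^sup>*})"

end

theory Submission
  imports Defs
begin

lemma adj_sym: "sym (induced_adj G S)"
  unfolding sym_def induced_adj_def by (auto simp: insert_commute)

lemma rt_sym: "(x,y) \<in> (induced_adj G S)\<^sup>* \<Longrightarrow> (y,x) \<in> (induced_adj G S)\<^sup>*"
  using sym_rtrancl[OF adj_sym] by (meson symD)

lemma adj_mono: "S \<subseteq> T \<Longrightarrow> induced_adj G S \<subseteq> induced_adj G T"
  unfolding induced_adj_def by auto

lemma rt_mono: "S \<subseteq> T \<Longrightarrow> (x,y) \<in> (induced_adj G S)\<^sup>* \<Longrightarrow> (x,y) \<in> (induced_adj G T)\<^sup>*"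
  using rtrancl_mono[OF adj_mono] by blast

lemma rt_mem: "(x,y) \<in> (induced_adj G S)\<^sup>* \<Longrightarrow> y = x \<or> y \<in> S"
  by (induction rule: rtrancl_induct) (auto simp: induced_adj_def)

lemma comp_self: "x \<in> I \<Longrightarrow> x \<in> component G I x"
  unfolding component_def by auto

lemma comp_sub: "component G I x \<subseteq> I"
  unfolding component_def by auto

lemma comp_eq: "y \<in> component G I x \<Longrightarrow> component G I y = component G I x"
proof -
  assume "y \<in> component G I x"
  then have xy: "(x,y) \<in> (induced_adj G I)\<^sup>*" and yx: "(y,x) \<in> (induced_adj G I)\<^sup>*"
    using rt_sym[of x y G I] unfolding component_def by auto
  show ?thesis unfolding component_def
    using rtrancl_trans[OF xy] rtrancl_trans[OF yx] by auto
qed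

lemma even_closed:
  assumes "J \<in> EC G" "finite T" "T \<subseteq> J" "\<forall>y\<in>T. component G J y \<subseteq> T"
  shows "even (card T)"
  using assms(2-4)
proof (induction "card T" arbitrary: T rule: less_induct)
  case less
  show ?case
  proof (cases "T = {}")
    case True thus ?thesis by simp
  next
    case False
    then obtain y where y: "y \<in> T" by auto
    let ?C = "component G J y"
    have C: "?C \<subseteq> T" using less.prems y by auto
    have yC: "y \<in> ?C" using comp_self[of y J G] y less.prems by blast
    have eC: "even (card ?C)" using assms(1) y less.prems unfolding EC_def by auto
    have closed: "\<forall>z\<in>T-?C. component G J z \<subseteq> T - ?C"
    proof (intro ballI subsetI)
      fix z w assume z: "z \<in> T - ?C" and w: "w \<in> component G J z"
      have "w \<in> T" using less.prems z w by auto
      moreover have "w \<notin> ?C"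
      proof
        assume "w \<in> ?C"
        then have "component G J w = ?C" by (rule comp_eq)
        moreover have "component G J w = component G J z" using w by (rule comp_eq)
        moreover have "z \<in> component G J z" using comp_self[of z J G] z less.prems by blast
        ultimately show False using z by auto
      qed
      ultimately show "w \<in> T - ?C" by auto
    qed
    have fin: "finite ?C" using C less.prems(1) finite_subset by blast
    have "T - ?C \<subset> T" using yC y by auto
    then have "card (T - ?C) < card T" using less.prems(1) psubset_card_mono by blast
    moreover have "finite (T - ?C)" "T - ?C \<subseteq> J" using less.prems by auto
    ultimately have "even (card (T - ?C))" using less.hyps closed by blast
    moreover have "card (T - ?C) = card T - card ?C" using C fin card_Diff_subset by blast
    moreover have "card ?C \<le> card T" using C less.prems(1) card_mono by blast
    ultimately show ?thesis using eC by presburger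
  qed
qed

lemma even_inter:
  assumes "J \<in> EC G" "J \<subseteq> I" "finite I"
  shows "even (card (component G I x \<inter> J))"
proof (rule even_closed[OF assms(1)])
  show "finite (component G I x \<inter> J)" using assms(3) comp_sub[of G I x] finite_subset by blast
  show "component G I x \<inter> J \<subseteq> J" by auto
  show "\<forall>y\<in>component G I x \<inter> J. component G J y \<subseteq> component G I x \<inter> J"
  proof (intro ballI subsetI)
    fix y w assume y: "y \<in> component G I x \<inter> J" and w: "w \<in> component G J y"
    have "(y,w) \<in> (induced_adj G J)\<^sup>*" using w unfolding component_def by auto
    then have "(y,w) \<in> (induced_adj G I)\<^sup>*" using rt_mono[OF assms(2)] by blast
    moreover have "(x,y) \<in> (induced_adj G I)\<^sup>*" using y unfolding component_def by auto
    ultimately have "(x,w) \<in> (induced_adj G I)\<^sup>*" by auto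
    then show "w \<in> component G I x \<inter> J" using w assms(2) unfolding component_def by auto
  qed
qed

lemma verts_rc: "verts (reconnected_complement G J) = verts G - J"
  by (simp add: reconnected_complement_def verts_def)

lemma edge_rc:
  assumes "{a,b} \<in> edges (reconnected_complement G J)"
  shows "a \<noteq> b \<and> a \<in> verts G - J \<and> b \<in> verts G - J \<and> (a,b) \<in> (induced_adj G (J \<union> {a,b}))\<^sup>*"
proof -
  obtain a' b' where ab: "{a,b} = {a',b'}" "a' \<in> verts G - J" "b' \<in> verts G - J" "a' \<noteq> b'"
    "(a', b') \<in> (induced_adj G (J \<union> {a', b'}))\<^sup>*"
    using assms unfolding reconnected_complement_def edges_def by auto
  show ?thesis
  proof (cases "a = a' \<and> b = b'")
    case True thus ?thesis using ab by auto
  next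
    case False
    then have "a = b' \<and> b = a'" using ab(1) by (auto simp: doubleton_eq_iff)
    then show ?thesis using ab rt_sym by (metis insert_commute)
  qed
qed

lemma edge_rc_intro:
  "a \<noteq> b \<Longrightarrow> a \<in> verts G - J \<Longrightarrow> b \<in> verts G - J \<Longrightarrow> (a,b) \<in> (induced_adj G (J \<union> {a,b}))\<^sup>*
   \<Longrightarrow> {a,b} \<in> edges (reconnected_complement G J)"
  unfolding reconnected_complement_def edges_def by auto

lemma rc_to_G:
  assumes "J \<subseteq> I"
  shows "(x,y) \<in> (induced_adj (reconnected_complement G J) (I - J))\<^sup>* \<Longrightarrow> (x,y) \<in> (induced_adj G I)\<^sup>*"
proof (induction rule: rtrancl_induct)
  case base then show ?case by simp
next
  case (step y z)
  then have "y \<in> I - J" "z \<in> I - J" "{y,z} \<in> edges (reconnected_complement G J)"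
    unfolding induced_adj_def by auto
  then have "(y,z) \<in> (induced_adj G I)\<^sup>*"
    using edge_rc[of y z G J] rt_mono[of "J \<union> {y,z}" I] assms by auto
  then show ?case using step by auto
qed

lemma G_edge_rc:
  assumes "I \<subseteq> verts G" "z \<in> I - J" "w \<in> I - J" "(z,w) \<in> (induced_adj G (J \<union> {z,w}))\<^sup>*"
  shows "(z,w) \<in> (induced_adj (reconnected_complement G J) (I - J))\<^sup>*"
proof (cases "z = w")
  case True thus ?thesis by simp
next
  case False
  then have "{z,w} \<in> edges (reconnected_complement G J)"
    using edge_rc_intro[of z w G J] assms by auto
  then have "(z,w) \<in> induced_adj (reconnected_complement G J) (I - J)"
    using assms unfolding induced_adj_def by auto
  then show ?thesis by auto
qed

lemma G_to_rc:
  assumes "J \<subseteq> I" "I \<subseteq> verts G" "x \<in> I - J"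
  shows "(x,y) \<in> (induced_adj G I)\<^sup>* \<Longrightarrow> \<exists>z. z \<in> I - J \<and>
     (x,z) \<in> (induced_adj (reconnected_complement G J) (I - J))\<^sup>* \<and>
     (z,y) \<in> (induced_adj G (insert z J))\<^sup>*"
proof (induction rule: rtrancl_induct)
  case base then show ?case using assms by auto
next
  case (step y w)
  then obtain z where z: "z \<in> I - J" "(x,z) \<in> (induced_adj (reconnected_complement G J) (I - J))\<^sup>*"
     "(z,y) \<in> (induced_adj G (insert z J))\<^sup>*" by blast
  have yin: "y \<in> insert z J" using rt_mem[OF z(3)] by auto
  have yw: "{y,w} \<in> edges G" "w \<in> I" using step(2) unfolding induced_adj_def by auto
  show ?case
  proof (cases "w \<in> J")
    case True
    then have "(y,w) \<in> induced_adj G (insert z J)" using yin yw unfolding induced_adj_def by auto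
    then show ?thesis using z by (meson rtrancl.rtrancl_into_rtrancl)
  next
    case False
    have "(z,y) \<in> (induced_adj G (J \<union> {z,w}))\<^sup>*" using rt_mono[OF _ z(3), of "J \<union> {z,w}"] by auto
    moreover have "(y,w) \<in> induced_adj G (J \<union> {z,w})" using yin yw unfolding induced_adj_def by auto
    ultimately have "(z,w) \<in> (induced_adj G (J \<union> {z,w}))\<^sup>*" by auto
    then have "(z,w) \<in> (induced_adj (reconnected_complement G J) (I - J))\<^sup>*"
      using G_edge_rc[OF assms(2) z(1)] False yw by auto
    then have "(x,w) \<in> (induced_adj (reconnected_complement G J) (I - J))\<^sup>*" using z(2) by auto
    then show ?thesis using False yw by auto
  qed
qed

lemma comp_rc:
  assumes "J \<subseteq> I" "I \<subseteq> verts G" "x \<in> I - J"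
  shows "component (reconnected_complement G J) (I - J) x = component G I x - J"
proof
  show "component (reconnected_complement G J) (I - J) x \<subseteq> component G I x - J"
    using rc_to_G[OF assms(1), of _ _ G] unfolding component_def by auto
  show "component G I x - J \<subseteq> component (reconnected_complement G J) (I - J) x"
  proof
    fix y assume y: "y \<in> component G I x - J"
    then have xy: "(x,y) \<in> (induced_adj G I)\<^sup>*" "y \<in> I - J" unfolding component_def by auto
    obtain z where z: "z \<in> I - J" "(x,z) \<in> (induced_adj (reconnected_complement G J) (I - J))\<^sup>*"
     "(z,y) \<in> (induced_adj G (insert z J))\<^sup>*" using G_to_rc[OF assms xy(1)] by blast
    have "(z,y) \<in> (induced_adj G (J \<union> {z,y}))\<^sup>*" using rt_mono[OF _ z(3), of "J \<union> {z,y}"] by auto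
    then have "(z,y) \<in> (induced_adj (reconnected_complement G J) (I - J))\<^sup>*"
      using G_edge_rc[OF assms(2) z(1) xy(2)] by auto
    then show "y \<in> component (reconnected_complement G J) (I - J) x"
      using z(2) xy(2) unfolding component_def by auto
  qed
qed

lemma EC_rc:
  assumes "J \<in> EC G" "J \<subseteq> I" "I \<subseteq> verts G" "finite (verts G)"
  shows "I \<in> EC G \<longleftrightarrow> I - J \<in> EC (reconnected_complement G J)"
proof -
  have finI: "finite I" using assms finite_subset by blast
  have split: "card (component G I x) = card (component G I x - J) + card (component G I x \<inter> J)" for x
  proof -
    have f: "finite (component G I x)" using finI comp_sub[of G I x] finite_subset by blast
    have "component G I x = (component G I x - J) \<union> (component G I x \<inter> J)" by auto
    moreover have "card ((component G I x - J) \<union> (component G I x \<inter> J)) = card (component G I x - J) + card (component G I x \<inter> J)"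
      using f by (intro card_Un_disjoint) auto
    ultimately show ?thesis by simp
  qed
  have ei: "even (card (component G I x \<inter> J))" for x using even_inter[OF assms(1,2) finI] .
  show ?thesis
  proof
    assume "I \<in> EC G"
    then have ev: "\<forall>x\<in>I. even (card (component G I x))" unfolding EC_def by auto
    show "I - J \<in> EC (reconnected_complement G J)"
      unfolding EC_def
    proof (intro CollectI conjI ballI)
      show "I - J \<subseteq> verts (reconnected_complement G J)" using assms(3) verts_rc[of G J] by auto
      fix x assume x: "x \<in> I - J"
      show "even (card (component (reconnected_complement G J) (I - J) x))"
      proof -
        have "x \<in> I" using x by auto
        then have "even (card (component G I x))" using ev by blast
        then have "even (card (component G I x - J))" using split[of x] ei[of x] by presburger
        then show ?thesis using comp_rc[OF assms(2,3) x] by simp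
      qed
    qed
  next
    assume "I - J \<in> EC (reconnected_complement G J)"
    then have ev: "\<forall>x\<in>I-J. even (card (component (reconnected_complement G J) (I - J) x))"
      unfolding EC_def by auto
    show "I \<in> EC G" unfolding EC_def
    proof (intro CollectI conjI ballI)
      show "I \<subseteq> verts G" by fact
      fix x assume x: "x \<in> I"
      show "even (card (component G I x))"
      proof (cases "component G I x \<subseteq> J")
        case True
        then have "component G I x \<inter> J = component G I x" by blast
        then show ?thesis using ei[of x] by simp
      next
        case False
        then obtain y where y: "y \<in> component G I x" "y \<notin> J" by auto
        have yI: "y \<in> I - J" using y comp_sub[of G I x] by blast
        have "component G I y = component G I x" using y(1) by (rule comp_eq)
        moreover have "even (card (component G I y - J))"
          using comp_rc[OF assms(2,3) yI] ev[rule_format, OF yI] by simp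
        ultimately show ?thesis using split[of y] ei[of y] by simp
      qed
    qed
  qed
qed


lemma chain_mono:
  assumes "c \<in> chains G I k" "i \<le> j" "j \<le> k"
  shows "c ! i \<subseteq> c ! j"
  using assms(2,3)
proof (induction j)
  case 0 thus ?case by simp
next
  case (Suc j)
  show ?case
  proof (cases "i = Suc j")
    case True thus ?thesis by simp
  next
    case False
    then have "c ! i \<subseteq> c ! j" using Suc by auto
    moreover have "c ! j \<subset> c ! Suc j" using assms(1) Suc.prems unfolding chains_def by auto
    ultimately show ?thesis by auto
  qed
qed

lemma chain_bounds:
  assumes "c \<in> chains G I k" "j \<le> k"
  shows "I \<subseteq> c ! j" "c ! j \<subseteq> verts G"
proof -
  have "c ! 0 = I" "c ! k = verts G" using assms(1) unfolding chains_def by auto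
  then show "I \<subseteq> c ! j" "c ! j \<subseteq> verts G"
    using chain_mono[OF assms(1), of 0 j] chain_mono[OF assms(1), of j k] assms(2) by auto
qed

lemma PP_rc:
  assumes "J \<in> PP G" "finite (verts G)" "J \<subseteq> I" "I \<subseteq> verts G"
  shows "I \<in> PP G \<longleftrightarrow> I - J \<in> PP (reconnected_complement G J)"
proof (cases "I = verts G")
  case True
  then show ?thesis unfolding PP_def using verts_rc[of G J] by auto
next
  case False
  then have JV: "J \<noteq> verts G" using assms by auto
  then have JE: "J \<in> EC G" using assms(1) unfolding PP_def by auto
  have "I - J \<noteq> verts G - J" using False assms(3,4) by blast
  then have "I - J \<in> PP (reconnected_complement G J) \<longleftrightarrow> I - J \<in> EC (reconnected_complement G J)"
    unfolding PP_def using verts_rc[of G J] by auto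
  moreover have "I \<in> PP G \<longleftrightarrow> I \<in> EC G" unfolding PP_def using False by auto
  ultimately show ?thesis using EC_rc[OF JE assms(3,4,2)] by simp
qed

theorem mainTheorem5:
  fixes G :: "'a graph" and J :: "'a set" and i k :: nat
  assumes "simple_graph G"
    and "card (verts G) = 2 * i"
    and "J \<in> PP G"
    and "2 * k + card J \<le> 2 * i"
  shows "card (chains G J k) = card (chains (reconnected_complement G J) {} k)"
proof -
  let ?G' = "reconnected_complement G J"
  have fin: "finite (verts G)" using assms(1) unfolding simple_graph_def by auto
  have JV: "J \<subseteq> verts G" using assms(3) unfolding PP_def EC_def by auto
  have V': "verts ?G' = verts G - J" by (rule verts_rc)
  define f where "f = map (\<lambda>S. S - J)"
  define g where "g = map (\<lambda>S. S \<union> J)"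
  have A: "c ! j \<subseteq> verts G \<and> J \<subseteq> c ! j" if "c \<in> chains G J k" "j \<le> k" for c j
    using chain_bounds[OF that] by auto
  have B: "c ! j \<subseteq> verts G - J" if "c \<in> chains ?G' {} k" "j \<le> k" for c j
    using chain_bounds[OF that] V' by auto
  have len1: "length c = Suc k" if "c \<in> chains G J k" for c using that unfolding chains_def by auto
  have len2: "length c = Suc k" if "c \<in> chains ?G' {} k" for c using that unfolding chains_def by auto
  have "bij_betw f (chains G J k) (chains ?G' {} k)"
  proof (rule bij_betw_byWitness[where f' = g])
    show "\<forall>c\<in>chains G J k. g (f c) = c"
    proof
      fix c assume c: "c \<in> chains G J k"
      show "g (f c) = c" unfolding f_def g_def
        by (rule nth_equalityI) (use A[OF c] len1[OF c] in \<open>auto simp: less_Suc_eq_le\<close>)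
    qed
    show "\<forall>c\<in>chains ?G' {} k. f (g c) = c"
    proof
      fix c assume c: "c \<in> chains ?G' {} k"
      show "f (g c) = c" unfolding f_def g_def
        by (rule nth_equalityI) (use B[OF c] len2[OF c] in \<open>auto simp: less_Suc_eq_le\<close>)
    qed
    show "f ` chains G J k \<subseteq> chains ?G' {} k"
    proof
      fix d assume "d \<in> f ` chains G J k"
      then obtain c where c: "c \<in> chains G J k" and d: "d = f c" by auto
      have cd: "length c = Suc k" "c ! 0 = J" "c ! k = verts G" "\<forall>j<k. c ! j \<subset> c ! Suc j"
        "\<forall>j. 1 \<le> j \<and> j \<le> k \<longrightarrow> c ! j \<in> PP G" using c unfolding chains_def by auto
      have nth: "d ! j = c ! j - J" if "j \<le> k" for j using that cd(1) unfolding d f_def by auto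
      show "d \<in> chains ?G' {} k" unfolding chains_def
      proof (intro CollectI conjI allI impI)
        show "length d = Suc k" using cd(1) unfolding d f_def by simp
        show "d ! 0 = {}" using nth[of 0] cd(2) by simp
        show "d ! k = verts ?G'" using nth[of k] cd(3) V' by simp
        fix j
        { assume j: "j < k"
          have "c ! j \<subset> c ! Suc j" using cd(4) j by auto
          moreover have "J \<subseteq> c ! j" using A[OF c, of j] j by auto
          ultimately show "d ! j \<subset> d ! Suc j" using nth[of j] nth[of "Suc j"] j by auto }
        { assume j: "1 \<le> j \<and> j \<le> k"
          then have "c ! j \<in> PP G" using cd(5) by auto
          then show "d ! j \<in> PP ?G'" using PP_rc[OF assms(3) fin] A[OF c, of j] j nth[of j] by auto }
      qed
    qed
    show "g ` chains ?G' {} k \<subseteq> chains G J k"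
    proof
      fix d assume "d \<in> g ` chains ?G' {} k"
      then obtain c where c: "c \<in> chains ?G' {} k" and d: "d = g c" by auto
      have cd: "length c = Suc k" "c ! 0 = {}" "c ! k = verts ?G'" "\<forall>j<k. c ! j \<subset> c ! Suc j"
        "\<forall>j. 1 \<le> j \<and> j \<le> k \<longrightarrow> c ! j \<in> PP ?G'" using c unfolding chains_def by auto
      have nth: "d ! j = c ! j \<union> J" if "j \<le> k" for j using that cd(1) unfolding d g_def by auto
      show "d \<in> chains G J k" unfolding chains_def
      proof (intro CollectI conjI allI impI)
        show "length d = Suc k" using cd(1) unfolding d g_def by simp
        show "d ! 0 = J" using nth[of 0] cd(2) by simp
        show "d ! k = verts G" using nth[of k] cd(3) V' JV by auto
        fix j
        { assume j: "j < k"
          have "c ! j \<subset> c ! Suc j" using cd(4) j by auto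
          moreover have "c ! Suc j \<subseteq> verts G - J" using B[OF c, of "Suc j"] j by auto
          ultimately show "d ! j \<subset> d ! Suc j" using nth[of j] nth[of "Suc j"] j by auto }
        { assume j: "1 \<le> j \<and> j \<le> k"
          then have "c ! j \<in> PP ?G'" using cd(5) by auto
          moreover have "c ! j \<union> J - J = c ! j" using B[OF c, of j] j by auto
          moreover have "J \<subseteq> c ! j \<union> J" "c ! j \<union> J \<subseteq> verts G" using B[OF c, of j] j JV by auto
          ultimately show "d ! j \<in> PP G" using PP_rc[OF assms(3) fin, of "c ! j \<union> J"] nth[of j] j by auto }
      qed
    qed
  qed
  then show ?thesis by (rule bij_betw_same_card)
qed

end
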